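(* Let $r\ge1$ and let $\tau,\tau'$ be permutations of $F^r$ fixing $\mathbf 0$. (i) If $SQS_\tau$ and $SQS_{\tau'}$ are both affine, they are isomorphic. (ii) If at least one of $SQS_\tau$, $SQS_{\tau'}$ is not affine, then for a permutation $\pi$ of the point set we have $SQS_\tau\sim_\pi SQS_{\tau'}$ if and only if one of the following holds: (a) $\pi=(\sigma_{a,A}|\sigma_{b,B})$ for some $(a,A),(b,B)\in\mathrm{GA}(r,2)$ with $\tau'=B\tau A^{-1}$; (b) $\pi=(\sigma_{a,A}|\sigma_{b,B})\,\xi$ for some $(a,A),(b,B)\in\mathrm{GA}(r,2)$ with $\tau'=B\tau^{-1}A^{-1}$. Moreover, for any $(a,A),(b,B)\in\mathrm{GA}(r,2)$ and any $\tau$, the permutation in (a) (resp. (b)) maps $SQS_\tau$ onto $SQS_{B\tau A^{-1}}$ (resp. $SQS_{B\tau^{-1}A^{-1}}$).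
   Context: $F=\mathrm{GF}(2)$, $\mathbf 0$ is the all-zero vector. The point set consists of the $2^{r+1}$ symbols $(\{a\},\emptyset)$ and $(\emptyset,\{a\})$, $a\in F^r$; a pair $(X,Y)$ with $X,Y\subseteq F^r$ denotes the set of points $\{(\{x\},\emptyset):x\in X\}\cup\{(\emptyset,\{y\}):y\in Y\}$. $SQS_\tau=Q_0\cup Q_1\cup Q_\tau$ where $Q_0=\{(\{a,b,c,d\},\emptyset): a,b,c,d\in F^r \text{ pairwise distinct}, a+b+c+d=\mathbf 0\}$, $Q_1=\{(\emptyset,\{a,b,c,d\}): a,b,c,d\in F^r \text{ pairwise distinct}, a+b+c+d=\mathbf 0\}$, $Q_\tau=\{(\{a,c\},\{b,d\}): a,b,c,d\in F^r, \tau(a+c)=b+d\neq\mathbf 0\}$. $SQS_\tau\sim_\pi SQS_{\tau'}$ means that $\pi$ maps the set of quadruples of $SQS_\tau$ onto that of $SQS_{\tau'}$. A Steiner quadruple system is affine if it is (isomorphic to) the system of supports of the weight-4 codewords of an extended Hamming code of the same length. $\mathrm{GA}(r,2)$ is the group of affine maps $(a,M):b\mapsto a+Mb$ of $F^r$, $a\in F^r$, $M\in\mathrm{GL}(r,2)$. For $(a,A),(b,B)\in\mathrm{GA}(r,2)$, $(\sigma_{a,A}|\sigma_{b,B})$ is the permutation of points $(\{c\},\emptyset)\mapsto(\{a+Ac\},\emptyset)$, $(\emptyset,\{c\})\mapsto(\emptyset,\{b+Bc\})$. $\xi$ is the permutation swapping $(\{c\},\emptyset)$ and $(\emptyset,\{c\})$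 for every $c\in F^r$. For a permutation $\rho$ of $F^r$ and $A,B\in\mathrm{GL}(r,2)$, $B\rho A^{-1}$ denotes the permutation $x\mapsto B\rho(A^{-1}x)$ of $F^r$. *)

theory Defs
  imports "HOL-Analysis.Analysis" "HOL-Library.Z2"
begin

text \<open>F = GF(2) is the type bit; F^r is bit ^ 'n with r = CARD('n).
  Points: Inl c is the symbol ({c},{}), Inr c is the symbol ({},{c}).\<close>

instance bit :: finite
  by standard (rule finite_subset[of _ "{0, 1}"], use bit_not_zero_iff in auto)

type_synonym 'n point = "(bit ^ 'n) + (bit ^ 'n)"

definition Q0 :: "'n::finite point set set" where
  "Q0 = {Inl ` {a, b, c, d} | a b c d. distinct [a, b, c, d] \<and> a + b + c + d = 0}"

definition Q1 :: "'n::finite point set set" where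
  "Q1 = {Inr ` {a, b, c, d} | a b c d. distinct [a, b, c, d] \<and> a + b + c + d = 0}"

definition Qtau :: "(bit ^ 'n \<Rightarrow> bit ^ 'n) \<Rightarrow> 'n::finite point set set" where
  "Qtau \<tau> = {Inl ` {a, c} \<union> Inr ` {b, d} | a b c d. \<tau> (a + c) = b + d \<and> b + d \<noteq> 0}"

definition SQS :: "(bit ^ 'n \<Rightarrow> bit ^ 'n) \<Rightarrow> 'n::finite point set set" where
  "SQS \<tau> = Q0 \<union> Q1 \<union> Qtau \<tau>"

definition sqs_sim :: "('n::finite point \<Rightarrow> 'n point) \<Rightarrow> (bit ^ 'n \<Rightarrow> bit ^ 'n) \<Rightarrow> (bit ^ 'n \<Rightarrow> bit ^ 'n) \<Rightarrow> bool" where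
  "sqs_sim \<pi> \<tau> \<tau>' \<longleftrightarrow> (\<lambda>q. \<pi> ` q) ` SQS \<tau> = SQS \<tau>'"

text \<open>Extended Hamming code of length 2^m, coordinates indexed by F^m
  (parity-check matrix with columns (1, x), x in F^m).\<close>
definition ext_hamming_code :: "(bit ^ 'm \<Rightarrow> bit) set" where
  "ext_hamming_code = {c. (\<Sum>x\<in>UNIV. c x) = 0 \<and> (\<Sum>x\<in>UNIV. c x *s x) = 0}"

definition hamming_sqs :: "(bit ^ 'm::finite) set set" where
  "hamming_sqs = {{x. c x \<noteq> 0} | c. c \<in> ext_hamming_code \<and> card {x. c x \<noteq> 0} = 4}"

definition affine_SQS :: "(bit ^ 'n \<Rightarrow> bit ^ 'n) \<Rightarrow> bool" where
  "affine_SQS \<tau> \<longleftrightarrow> (\<exists>\<phi> :: 'n::finite point \<Rightarrow> bit ^ ('n option).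
      bij \<phi> \<and> (\<lambda>q. \<phi> ` q) ` SQS \<tau> = hamming_sqs)"

definition sigma2 :: "bit ^ 'n \<Rightarrow> bit ^ 'n ^ 'n \<Rightarrow> bit ^ 'n \<Rightarrow> bit ^ 'n ^ 'n \<Rightarrow> 'n::finite point \<Rightarrow> 'n point" where
  "sigma2 a A b B p = (case p of Inl c \<Rightarrow> Inl (a + A *v c) | Inr c \<Rightarrow> Inr (b + B *v c))"

definition xi :: "'n::finite point \<Rightarrow> 'n point" where
  "xi p = (case p of Inl c \<Rightarrow> Inr c | Inr c \<Rightarrow> Inl c)"

definition conj_perm :: "bit ^ 'n ^ 'n \<Rightarrow> (bit ^ 'n \<Rightarrow> bit ^ 'n) \<Rightarrow> bit ^ 'n ^ 'n \<Rightarrow> bit ^ 'n::finite \<Rightarrow> bit ^ 'n" where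
  "conj_perm B \<rho> A x = B *v \<rho> (matrix_inv A *v x)"

end

theory Submission
  imports Defs
begin

lemma bit_add_self[simp]: "(x::bit) + x = 0"
  by (cases x) auto

lemma vec_add_self[simp]: "(x::bit^'n) + x = 0"
  by (simp add: vec_eq_iff)

lemma vec_add_self2[simp]: "(x::bit^'n) + (x + y) = y"
  by (simp add: add.assoc[symmetric])

lemma bit_uminus[simp]: "- (x::bit) = x"
  by (cases x) simp_all

lemma vec_uminus[simp]: "- (x::bit^'n) = x"
  by (simp add: vec_eq_iff)

lemma vec_minus[simp]: "(x::bit^'n) - y = x + y"
  by (simp add: diff_conv_add_uminus)

lemma minv: "invertible A \<Longrightarrow> A ** matrix_inv A = mat 1 \<and> matrix_inv A ** A = mat 1"
  unfolding invertible_def matrix_inv_def by (rule someI_ex)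

lemma minv_vec1[simp]: "invertible A \<Longrightarrow> matrix_inv A *v (A *v x) = (x::'a::field^'n)"
  by (metis minv matrix_vector_mul_assoc matrix_vector_mul_lid)

lemma minv_vec2[simp]: "invertible A \<Longrightarrow> A *v (matrix_inv A *v x) = (x::'a::field^'n)"
  by (metis minv matrix_vector_mul_assoc matrix_vector_mul_lid)

lemma invertible_minv: "invertible (A::'a::field^'n^'n) \<Longrightarrow> invertible (matrix_inv A)"
  using minv unfolding invertible_def by blast

lemma minv_minv: assumes "invertible (A::'a::field^'n^'n)" shows "matrix_inv (matrix_inv A) = A"
proof -
  have 1: "matrix_inv A ** A = mat 1" using minv[OF assms] by blast
  have 2: "matrix_inv (matrix_inv A) ** matrix_inv A = mat 1" using minv[OF invertible_minv[OF assms]] by blast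
  have "matrix_inv (matrix_inv A) = matrix_inv (matrix_inv A) ** (matrix_inv A ** A)" by (simp add: 1)
  also have "\<dots> = A" by (simp add: matrix_mul_assoc 2)
  finally show ?thesis .
qed

lemma conj_perm_A: "invertible A \<Longrightarrow> conj_perm B \<rho> A (A *v x) = B *v \<rho> x"
  by (simp add: conj_perm_def)

lemma mv_inj: "invertible A \<Longrightarrow> A *v x = A *v y \<longleftrightarrow> (x::'a::field^'n) = y"
  by (metis minv_vec1)

lemma sigma2_Inl[simp]: "sigma2 a A b B (Inl x) = Inl (a + A *v x)"
  and sigma2_Inr[simp]: "sigma2 a A b B (Inr x) = Inr (b + B *v x)"
  by (simp_all add: sigma2_def)

lemma xi_simps[simp]: "xi (Inl x) = Inr x" "xi (Inr x) = Inl x"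
  by (simp_all add: xi_def)

lemma sigma_sub:
  assumes A: "invertible A" and B: "invertible B"
  shows "(\<lambda>q. sigma2 a A b B ` q) ` SQS \<rho> \<subseteq> SQS (conj_perm B \<rho> A)"
proof
  fix q' assume "q' \<in> (\<lambda>q. sigma2 a A b B ` q) ` SQS \<rho>"
  then obtain q where q: "q \<in> SQS \<rho>" and q': "q' = sigma2 a A b B ` q" by auto
  let ?f = "\<lambda>x. a + A *v x" and ?g = "\<lambda>x. b + B *v x"
  have injf: "?f x = ?f y \<longleftrightarrow> x = y" for x y using mv_inj[OF A] by auto
  have injg: "?g x = ?g y \<longleftrightarrow> x = y" for x y using mv_inj[OF B] by auto
  have sf: "?f x + ?f y = A *v (x + y)" for x y
    by (simp add: matrix_vector_right_distrib algebra_simps)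
  have sg: "?g x + ?g y = B *v (x + y)" for x y
    by (simp add: matrix_vector_right_distrib algebra_simps)
  have B0: "B *v x = 0 \<longleftrightarrow> x = 0" for x
    using mv_inj[OF B, of x 0] by simp
  from q consider (Q0) "q \<in> Q0" | (Q1) "q \<in> Q1" | (Qt) "q \<in> Qtau \<rho>" unfolding SQS_def by blast
  then show "q' \<in> SQS (conj_perm B \<rho> A)"
  proof cases
    case Q0
    then obtain x y z w where d: "distinct [x,y,z,w]" and s: "x+y+z+w = 0" and q: "q = Inl ` {x,y,z,w}"
      unfolding Q0_def by blast
    have "q' = Inl ` {?f x, ?f y, ?f z, ?f w}" using q q' by (auto simp: image_image)
    moreover have "distinct [?f x, ?f y, ?f z, ?f w]" using d injf by auto
    moreover have "?f x + ?f y + ?f z + ?f w = 0"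
      by (metis add.assoc sf s matrix_vector_mult_0_right matrix_vector_right_distrib)
    ultimately have "q' \<in> Q0" unfolding Q0_def by blast
    then show ?thesis unfolding SQS_def by blast
  next
    case Q1
    then obtain x y z w where d: "distinct [x,y,z,w]" and s: "x+y+z+w = 0" and q: "q = Inr ` {x,y,z,w}"
      unfolding Q1_def by blast
    have "q' = Inr ` {?g x, ?g y, ?g z, ?g w}" using q q' by (auto simp: image_image)
    moreover have "distinct [?g x, ?g y, ?g z, ?g w]" using d injg by auto
    moreover have "?g x + ?g y + ?g z + ?g w = 0"
      by (metis add.assoc sg s matrix_vector_mult_0_right matrix_vector_right_distrib)
    ultimately have "q' \<in> Q1" unfolding Q1_def by blast
    then show ?thesis unfolding SQS_def by blast
  next
    case Qt
    then obtain x y z w where s: "\<rho> (x + z) = y + w" and nz: "y + w \<noteq> 0"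
      and q: "q = Inl ` {x, z} \<union> Inr ` {y, w}"
      unfolding Qtau_def by blast
    have "q' = Inl ` {?f x, ?f z} \<union> Inr ` {?g y, ?g w}" using q q' by (auto simp: image_image)
    moreover have "conj_perm B \<rho> A (?f x + ?f z) = ?g y + ?g w"
      by (simp only: sf sg conj_perm_A[OF A] s)
    moreover have "?g y + ?g w \<noteq> 0" using sg B0 nz by simp
    ultimately have "q' \<in> Qtau (conj_perm B \<rho> A)" unfolding Qtau_def by blast
    then show ?thesis unfolding SQS_def by blast
  qed
qed

lemma image_sets_eq:
  assumes fg: "\<And>p. f (g p) = p" and gf: "\<And>p. g (f p) = p"
    and s1: "(\<lambda>q. f ` q) ` S \<subseteq> S'" and s2: "(\<lambda>q. g ` q) ` S' \<subseteq> S"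
  shows "(\<lambda>q. f ` q) ` S = S'"
proof
  show "S' \<subseteq> (\<lambda>q. f ` q) ` S"
  proof
    fix q assume "q \<in> S'"
    then have "g ` q \<in> S" using s2 by blast
    moreover have "f ` (g ` q) = q" by (simp add: image_image fg)
    ultimately show "q \<in> (\<lambda>q. f ` q) ` S" by (metis image_eqI)
  qed
qed (rule s1)

lemma sigma_sim:
  assumes A: "invertible A" and B: "invertible B"
  shows "sqs_sim (sigma2 a A b B) \<rho> (conj_perm B \<rho> A)"
proof -
  let ?A = "matrix_inv A" and ?B = "matrix_inv B"
  let ?g = "sigma2 (?A *v a) ?A (?B *v b) ?B"
  have iA: "invertible ?A" and iB: "invertible ?B" using A B by (simp_all add: invertible_minv)
  have fg: "sigma2 a A b B (?g p) = p" for p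
    using A B by (cases p) (simp_all add: matrix_vector_right_distrib)
  have gf: "?g (sigma2 a A b B p) = p" for p
    using A B by (cases p) (simp_all add: matrix_vector_right_distrib)
  have cc: "conj_perm ?B (conj_perm B \<rho> A) ?A = \<rho>"
    using A B by (simp add: conj_perm_def minv_minv fun_eq_iff)
  have "(\<lambda>q. ?g ` q) ` SQS (conj_perm B \<rho> A) \<subseteq> SQS \<rho>"
    using sigma_sub[OF iA iB, of "?A *v a" "?B *v b" "conj_perm B \<rho> A"] cc by simp
  then show ?thesis unfolding sqs_sim_def
    by (intro image_sets_eq[OF fg gf] sigma_sub[OF A B])
qed

lemma xi_sub:
  assumes "bij \<rho>" "\<rho> 0 = 0"
  shows "(\<lambda>q. xi ` q) ` SQS \<rho> \<subseteq> SQS (inv \<rho>)"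
proof
  fix q' assume "q' \<in> (\<lambda>q. xi ` q) ` SQS \<rho>"
  then obtain q where q: "q \<in> SQS \<rho>" and q': "q' = xi ` q" by auto
  from q consider (Q0) "q \<in> Q0" | (Q1) "q \<in> Q1" | (Qt) "q \<in> Qtau \<rho>" unfolding SQS_def by blast
  then show "q' \<in> SQS (inv \<rho>)"
  proof cases
    case Q0
    then obtain x y z w where d: "distinct [x,y,z,w]" and s: "x+y+z+w = 0" and q: "q = Inl ` {x,y,z,w}"
      unfolding Q0_def by blast
    have "q' = Inr ` {x,y,z,w}" using q q' by (auto simp: image_image)
    then have "q' \<in> Q1" unfolding Q1_def using d s by blast
    then show ?thesis unfolding SQS_def by blast
  next
    case Q1
    then obtain x y z w where d: "distinct [x,y,z,w]" and s: "x+y+z+w = 0" and q: "q = Inr ` {x,y,z,w}"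
      unfolding Q1_def by blast
    have "q' = Inl ` {x,y,z,w}" using q q' by (auto simp: image_image)
    then have "q' \<in> Q0" unfolding Q0_def using d s by blast
    then show ?thesis unfolding SQS_def by blast
  next
    case Qt
    then obtain x y z w where s: "\<rho> (x + z) = y + w" and nz: "y + w \<noteq> 0"
      and q: "q = Inl ` {x, z} \<union> Inr ` {y, w}"
      unfolding Qtau_def by blast
    have "q' = Inl ` {y, w} \<union> Inr ` {x, z}" using q q' by (auto simp: image_image)
    moreover have "inv \<rho> (y + w) = x + z" using s assms by (metis bij_inv_eq_iff)
    moreover have "x + z \<noteq> 0" using s nz assms by auto
    ultimately have "q' \<in> Qtau (inv \<rho>)" unfolding Qtau_def by blast
    then show ?thesis unfolding SQS_def by blast
  qed
qed

lemma xi_xi[simp]: "xi (xi p) = p"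
  by (cases p) simp_all

lemma xi_sim:
  assumes "bij \<rho>" "\<rho> 0 = 0"
  shows "sqs_sim xi \<rho> (inv \<rho>)"
proof -
  have b: "bij (inv \<rho>)" using assms by (simp add: bij_imp_bij_inv)
  have z: "inv \<rho> 0 = 0" using assms by (metis bij_inv_eq_iff)
  have "(\<lambda>q. xi ` q) ` SQS (inv \<rho>) \<subseteq> SQS \<rho>"
    using xi_sub[OF b z] assms by (simp add: inv_inv_eq)
  then show ?thesis unfolding sqs_sim_def
    by (intro image_sets_eq[where f=xi and g=xi, OF xi_xi xi_xi] xi_sub[OF assms])
qed

lemma sim_comp: "sqs_sim f \<rho>1 \<rho>2 \<Longrightarrow> sqs_sim g \<rho>2 \<rho>3 \<Longrightarrow> sqs_sim (g \<circ> f) \<rho>1 \<rho>3"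
proof -
  assume 1: "sqs_sim f \<rho>1 \<rho>2" and 2: "sqs_sim g \<rho>2 \<rho>3"
  have e: "(\<lambda>q. (g \<circ> f) ` q) = (\<lambda>q. g ` q) \<circ> (\<lambda>q. f ` q)" by (auto simp: fun_eq_iff image_comp)
  have "(\<lambda>q. (g \<circ> f) ` q) ` SQS \<rho>1 = (\<lambda>q. g ` q) ` ((\<lambda>q. f ` q) ` SQS \<rho>1)"
    unfolding e by (rule image_comp[symmetric])
  then show ?thesis using 1 2 unfolding sqs_sim_def by simp
qed

lemma part3:
  assumes "bij \<rho>" "\<rho> 0 = 0" "invertible A" "invertible B"
  shows "sqs_sim (sigma2 a A b B) \<rho> (conj_perm B \<rho> A)
        \<and> sqs_sim (sigma2 a A b B \<circ> xi) \<rho> (conj_perm B (inv \<rho>) A)"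
  using sigma_sim[OF assms(3,4)] sim_comp[OF xi_sim[OF assms(1,2)] sigma_sim[OF assms(3,4)]] by blast

lemma vec_add_eq0_iff[simp]: "(x::bit^'n) + y = 0 \<longleftrightarrow> x = y"
  by (metis add_right_imp_eq vec_add_self)

lemma vec_add_cancel1[simp]: "(x::bit^'n) + y = x \<longleftrightarrow> y = 0"
  by simp
lemma vec_add_cancel2[simp]: "(x::bit^'n) + y = y \<longleftrightarrow> x = 0"
  by simp
lemma vec_add_cancel3[simp]: "(x::bit^'n) = x + y \<longleftrightarrow> y = 0"
  by (metis add_cancel_left_right)
lemma vec_add_cancel4[simp]: "(y::bit^'n) = x + y \<longleftrightarrow> x = 0"
  by (metis add_cancel_right_left)

definition good :: "'a set set \<Rightarrow> 'a \<Rightarrow> 'a \<Rightarrow> bool" where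
  "good S p q \<longleftrightarrow> p \<noteq> q \<and> (\<forall>B1\<in>S. \<forall>B2\<in>S. p \<in> B1 \<longrightarrow> q \<in> B1 \<longrightarrow> p \<in> B2 \<longrightarrow> q \<in> B2
      \<longrightarrow> B1 \<noteq> B2 \<longrightarrow> (B1 \<union> B2) - {p, q} \<in> S)"

lemma good_sym: "good S p q \<longleftrightarrow> good S q p"
  unfolding good_def by (auto simp: insert_commute)

lemma good_inv:
  assumes "inj \<pi>"
  shows "good ((\<lambda>q. \<pi> ` q) ` S) (\<pi> p) (\<pi> q) \<longleftrightarrow> good S p q"
proof -
  have i: "inj (\<lambda>q. \<pi> ` q)" using assms by (simp add: inj_on_def inj_image_eq_iff)
  have m: "\<pi> x \<in> \<pi> ` X \<longleftrightarrow> x \<in> X" for x X using assms by (simp add: inj_image_mem_iff)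
  have e: "(\<pi> ` B1 \<union> \<pi> ` B2) - {\<pi> p, \<pi> q} = \<pi> ` ((B1 \<union> B2) - {p, q})" for B1 B2
    using assms by (auto simp: inj_eq)
  have mm: "\<pi> ` X \<in> (\<lambda>q. \<pi> ` q) ` S \<longleftrightarrow> X \<in> S" for X
    using i by (simp add: inj_image_mem_iff)
  have ne: "\<pi> ` B1 \<noteq> \<pi> ` B2 \<longleftrightarrow> B1 \<noteq> B2" for B1 B2 using assms by (simp add: inj_image_eq_iff)
  have pq: "\<pi> p \<noteq> \<pi> q \<longleftrightarrow> p \<noteq> q" using assms by (simp add: inj_eq)
  show ?thesis unfolding good_def by (simp add: m e mm ne pq del: image_insert image_Un)
qed

lemma card_pick2:
  assumes "card X = 4" "x \<in> X" "y \<in> X" "x \<noteq> y"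
  shows "\<exists>s t. X = {x, y, s, t} \<and> distinct [x, y, s, t]"
proof -
  have f: "finite X" using assms(1) by (metis card.infinite zero_neq_numeral)
  have "card (X - {x, y}) = 2" using assms f by (simp add: card_Diff_subset)
  then obtain s t where st: "X - {x, y} = {s, t}" "s \<noteq> t" by (auto simp: card_2_iff)
  then have "X = {x, y, s, t}" using assms by auto
  moreover have "distinct [x, y, s, t]" using st assms by auto
  ultimately show ?thesis by blast
qed

lemma sum4: "distinct [a, b, c, d] \<Longrightarrow> sum id {a, b, c, d} = a + b + c + (d::'a::comm_monoid_add)"
  by (simp add: add.assoc)

lemma blocks_LL:
  assumes "B \<in> SQS \<tau>" "Inl x \<in> B" "Inl y \<in> B" "x \<noteq> y"
  shows "(\<exists>s. s \<noteq> x \<and> s \<noteq> y \<and> B = Inl ` {x, y, s, x + y + s}) \<or> (\<exists>b. B = Inl ` {x, y} \<union> Inr ` {b, b + \<tau> (x + y)})"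
proof -
  from assms(1) consider (Q0) "B \<in> Q0" | (Q1) "B \<in> Q1" | (Qt) "B \<in> Qtau \<tau>" unfolding SQS_def by blast
  then show ?thesis
  proof cases
    case Q0
    then obtain a b c d where d: "distinct [a,b,c,d]" and s: "a+b+c+d = 0" and q: "B = Inl ` {a,b,c,d}"
      unfolding Q0_def by blast
    have c4: "card {a,b,c,d} = 4" using d by simp
    have xy: "x \<in> {a,b,c,d}" "y \<in> {a,b,c,d}" using assms q by auto
    obtain s t where st: "{a,b,c,d} = {x,y,s,t}" "distinct [x,y,s,t]"
      using card_pick2[OF c4 xy assms(4)] by blast
    have "x + y + s + t = 0" using sum4[OF d] sum4[OF st(2)] st(1) s by simp
    then have "t = x + y + s" by (metis vec_add_eq0_iff)
    have "s \<noteq> x" "s \<noteq> y" using st(2) by auto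
    then show ?thesis using st(1) q \<open>t = x + y + s\<close> by blast
  next
    case Q1
    then show ?thesis using assms unfolding Q1_def by auto
  next
    case Qt
    then obtain a b c d where s: "\<tau> (a + c) = b + d" and q: "B = Inl ` {a, c} \<union> Inr ` {b, d}"
      unfolding Qtau_def by blast
    have "x \<in> {a, c}" "y \<in> {a, c}" using assms q by auto
    then have "{a, c} = {x, y}" using assms(4) by auto
    then have "a + c = x + y" by (metis add.commute doubleton_eq_iff)
    then have "d = b + \<tau> (x + y)" using s by simp
    then show ?thesis using q \<open>{a, c} = {x, y}\<close> by blast
  qed
qed


lemma good_LL:
  assumes bij: "bij \<tau>" and z: "\<tau> 0 = 0" and xy: "x \<noteq> y"
  shows "good (SQS \<tau>) (Inl x) (Inl y)"
proof -
  let ?w = "\<tau> (x + y)"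
  have w: "?w \<noteq> 0" using bij z xy by (metis bij_pointE vec_add_eq0_iff)
  have PP: "(B1 \<union> B2) - {Inl x, Inl y} \<in> SQS \<tau>"
    if B1: "B1 = Inl ` {x, y, s, x + y + s}" and B2: "B2 = Inl ` {x, y, s', x + y + s'}"
      and ne: "B1 \<noteq> B2" and s: "s \<noteq> x" "s \<noteq> y" and s': "s' \<noteq> x" "s' \<noteq> y" for B1 B2 s s'
  proof -
    have n1: "s' \<noteq> s" using ne B1 B2 by auto
    have n2: "s' \<noteq> x + y + s"
    proof
      assume "s' = x + y + s"
      then have "x + y + s' = s" by (simp add: ac_simps)
      then have "B2 = B1" using B1 B2 \<open>s' = x + y + s\<close> by (simp add: insert_commute)
      then show False using ne by simp
    qed
    have e: "(B1 \<union> B2) - {Inl x, Inl y} = Inl ` {s, x + y + s, s', x + y + s'}"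
      using B1 B2 s s' xy by (auto simp: ac_simps)
    have "distinct [s, x + y + s, s', x + y + s']"
      using n1 n2 xy by (auto simp: ac_simps)
    moreover have "s + (x + y + s) + s' + (x + y + s') = 0" by (simp add: ac_simps)
    ultimately have "(B1 \<union> B2) - {Inl x, Inl y} \<in> Q0" unfolding e Q0_def by blast
    then show ?thesis unfolding SQS_def by blast
  qed
  have MM: "(B1 \<union> B2) - {Inl x, Inl y} \<in> SQS \<tau>"
    if B1: "B1 = Inl ` {x, y} \<union> Inr ` {b, b + ?w}" and B2: "B2 = Inl ` {x, y} \<union> Inr ` {b', b' + ?w}"
      and ne: "B1 \<noteq> B2" for B1 B2 b b'
  proof -
    have n1: "b' \<noteq> b" using ne B1 B2 by auto
    have n2: "b' \<noteq> b + ?w"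
    proof
      assume "b' = b + ?w"
      then have "b' + ?w = b" by (simp add: ac_simps)
      then have "B2 = B1" using B1 B2 \<open>b' = b + ?w\<close> by (simp add: insert_commute)
      then show False using ne by simp
    qed
    have e: "(B1 \<union> B2) - {Inl x, Inl y} = Inr ` {b, b + ?w, b', b' + ?w}"
      using B1 B2 by auto
    have "distinct [b, b + ?w, b', b' + ?w]"
      using n1 n2 w by (auto simp: ac_simps)
    moreover have "b + (b + ?w) + b' + (b' + ?w) = 0" by (simp add: ac_simps)
    ultimately have "(B1 \<union> B2) - {Inl x, Inl y} \<in> Q1" unfolding e Q1_def by blast
    then show ?thesis unfolding SQS_def by blast
  qed
  have PM: "(B1 \<union> B2) - {Inl x, Inl y} \<in> SQS \<tau>"
    if B1: "B1 = Inl ` {x, y, s, x + y + s}" and B2: "B2 = Inl ` {x, y} \<union> Inr ` {b, b + ?w}"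
      and s: "s \<noteq> x" "s \<noteq> y" for B1 B2 s b
  proof -
    have e: "(B1 \<union> B2) - {Inl x, Inl y} = Inl ` {s, x + y + s} \<union> Inr ` {b, b + ?w}"
      using B1 B2 s xy by (auto simp: ac_simps)
    have "\<tau> (s + (x + y + s)) = b + (b + ?w)" by (simp add: ac_simps)
    moreover have "b + (b + ?w) \<noteq> 0" using w by simp
    ultimately have "(B1 \<union> B2) - {Inl x, Inl y} \<in> Qtau \<tau>" unfolding e Qtau_def by blast
    then show ?thesis unfolding SQS_def by blast
  qed
  show ?thesis unfolding good_def
  proof (intro conjI ballI impI)
    show "Inl x \<noteq> Inl y" using xy by simp
  next
    fix B1 B2 assume b1: "B1 \<in> SQS \<tau>" and b2: "B2 \<in> SQS \<tau>"
      and m: "Inl x \<in> B1" "Inl y \<in> B1" "Inl x \<in> B2" "Inl y \<in> B2" and ne: "B1 \<noteq> B2"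
    from blocks_LL[OF b1 m(1,2) xy] blocks_LL[OF b2 m(3,4) xy]
    show "(B1 \<union> B2) - {Inl x, Inl y} \<in> SQS \<tau>"
    proof (elim disjE exE conjE)
      fix s s' assume h: "s \<noteq> x" "s \<noteq> y" "B1 = Inl ` {x, y, s, x + y + s}"
        "s' \<noteq> x" "s' \<noteq> y" "B2 = Inl ` {x, y, s', x + y + s'}"
      show ?thesis by (rule PP[OF h(3) h(6) ne h(1,2) h(4,5)])
    next
      fix s b assume h: "s \<noteq> x" "s \<noteq> y" "B1 = Inl ` {x, y, s, x + y + s}"
        "B2 = Inl ` {x, y} \<union> Inr ` {b, b + ?w}"
      show ?thesis by (rule PM[OF h(3) h(4) h(1,2)])
    next
      fix s b assume h: "s \<noteq> x" "s \<noteq> y" "B2 = Inl ` {x, y, s, x + y + s}"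
        "B1 = Inl ` {x, y} \<union> Inr ` {b, b + ?w}"
      have "(B2 \<union> B1) - {Inl x, Inl y} \<in> SQS \<tau>" by (rule PM[OF h(3) h(4) h(1,2)])
      then show ?thesis by (simp only: Un_commute)
    next
      fix b b' assume h: "B1 = Inl ` {x, y} \<union> Inr ` {b, b + ?w}" "B2 = Inl ` {x, y} \<union> Inr ` {b', b' + ?w}"
      show ?thesis by (rule MM[OF h ne])
    qed
  qed
qed

lemma inj_xi: "inj xi"
  by (metis inj_on_inverseI xi_xi)

lemma good_RR:
  assumes bij: "bij \<tau>" and z: "\<tau> 0 = 0" and xy: "x \<noteq> y"
  shows "good (SQS \<tau>) (Inr x) (Inr y)"
proof -
  have b: "bij (inv \<tau>)" using bij by (simp add: bij_imp_bij_inv)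
  have z': "inv \<tau> 0 = 0" using bij z by (metis bij_inv_eq_iff)
  have "(\<lambda>q. xi ` q) ` SQS \<tau> = SQS (inv \<tau>)" using xi_sim[OF bij z] unfolding sqs_sim_def .
  moreover have "good (SQS (inv \<tau>)) (Inl x) (Inl y)" by (rule good_LL[OF b z' xy])
  ultimately have "good ((\<lambda>q. xi ` q) ` SQS \<tau>) (xi (Inr x)) (xi (Inr y))" by simp
  then show ?thesis using good_inv[OF inj_xi] by blast
qed

definition nonlin :: "(bit^'n \<Rightarrow> bit^'n) \<Rightarrow> bool" where
  "nonlin \<tau> \<longleftrightarrow> (\<exists>u v. \<tau> (u + v) \<noteq> \<tau> u + \<tau> v)"

lemma inl_pre: "{x. Inl x \<in> Inl ` A \<union> Inr ` B} = A"
  by auto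
lemma inr_pre: "{x. Inr x \<in> Inl ` A \<union> Inr ` B} = B"
  by auto
lemma doubleton_sum: "{p, q} = {r, t} \<Longrightarrow> p + q = r + (t::'a::ab_semigroup_add)"
  by (metis add.commute doubleton_eq_iff)

lemma good_LR:
  assumes bij: "bij \<tau>" and z: "\<tau> 0 = 0" and nl: "nonlin \<tau>"
  shows "\<not> good (SQS \<tau>) (Inl a) (Inr b)"
proof
  assume g: "good (SQS \<tau>) (Inl a) (Inr b)"
  obtain u v where uv: "\<tau> (u + v) \<noteq> \<tau> u + \<tau> v" using nl unfolding nonlin_def by blast
  have u0: "u \<noteq> 0" using uv z by auto
  have v0: "v \<noteq> 0" using uv z by auto
  have tu: "\<tau> u \<noteq> 0" using u0 z bij by (metis bij_pointE)
  have tv: "\<tau> v \<noteq> 0" using v0 z bij by (metis bij_pointE)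
  have uv': "u \<noteq> v" using uv z by auto
  define B1 where "B1 = Inl ` {a, a + u} \<union> Inr ` {b, b + \<tau> u}"
  define B2 where "B2 = Inl ` {a, a + v} \<union> Inr ` {b, b + \<tau> v}"
  have "\<tau> (a + (a + u)) = b + (b + \<tau> u)" "b + (b + \<tau> u) \<noteq> 0" using tu by simp_all
  then have b1: "B1 \<in> SQS \<tau>" unfolding B1_def SQS_def Qtau_def by blast
  have "\<tau> (a + (a + v)) = b + (b + \<tau> v)" "b + (b + \<tau> v) \<noteq> 0" using tv by simp_all
  then have b2: "B2 \<in> SQS \<tau>" unfolding B2_def SQS_def Qtau_def by blast
  have ne: "B1 \<noteq> B2"
  proof
    assume e: "B1 = B2"
    have "Inl (a + u) \<in> B1" unfolding B1_def by simp
    then have "Inl (a + u) \<in> B2" using e by simp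
    then show False using u0 uv' unfolding B2_def by auto
  qed
  have D: "(B1 \<union> B2) - {Inl a, Inr b} = Inl ` {a + u, a + v} \<union> Inr ` {b + \<tau> u, b + \<tau> v}"
    unfolding B1_def B2_def using u0 v0 tu tv by auto
  have "(B1 \<union> B2) - {Inl a, Inr b} \<in> SQS \<tau>"
  proof -
    have mem: "Inl a \<in> B1" "Inr b \<in> B1" "Inl a \<in> B2" "Inr b \<in> B2" unfolding B1_def B2_def by simp_all
    show ?thesis using g b1 b2 ne mem unfolding good_def by blast
  qed
  then have m: "Inl ` {a + u, a + v} \<union> Inr ` {b + \<tau> u, b + \<tau> v} \<in> SQS \<tau>" unfolding D .
  have "\<not> (Inl ` {a + u, a + v} \<union> Inr ` {b + \<tau> u, b + \<tau> v} \<in> Q0)" unfolding Q0_def by auto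
  moreover have "\<not> (Inl ` {a + u, a + v} \<union> Inr ` {b + \<tau> u, b + \<tau> v} \<in> Q1)" unfolding Q1_def by auto
  ultimately have "Inl ` {a + u, a + v} \<union> Inr ` {b + \<tau> u, b + \<tau> v} \<in> Qtau \<tau>" using m unfolding SQS_def by blast
  then obtain a' b' c' d' where s: "\<tau> (a' + c') = b' + d'"
    and e: "Inl ` {a + u, a + v} \<union> Inr ` {b + \<tau> u, b + \<tau> v} = Inl ` {a', c'} \<union> Inr ` {b', d'}"
    unfolding Qtau_def by blast
  have "{a + u, a + v} = {a', c'}" using arg_cong[OF e, of "\<lambda>S. {x. Inl x \<in> S}"] by (simp only: inl_pre)
  then have "a' + c' = (a + u) + (a + v)" using doubleton_sum by metis
  then have 1: "a' + c' = u + v" by (simp add: ac_simps)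
  have "{b + \<tau> u, b + \<tau> v} = {b', d'}" using arg_cong[OF e, of "\<lambda>S. {x. Inr x \<in> S}"] by (simp only: inr_pre)
  then have "b' + d' = (b + \<tau> u) + (b + \<tau> v)" using doubleton_sum by metis
  then have 2: "b' + d' = \<tau> u + \<tau> v" by (simp add: ac_simps)
  show False using s 1 2 uv by simp
qed

lemma good_char:
  assumes "bij \<tau>" "\<tau> 0 = 0" "nonlin \<tau>" "p \<noteq> q"
  shows "good (SQS \<tau>) p q \<longleftrightarrow> isl p = isl q"
proof (cases p; cases q)
  fix x y assume "p = Inl x" "q = Inl y" then show ?thesis using good_LL assms by auto
next
  fix x y assume "p = Inr x" "q = Inr y" then show ?thesis using good_RR assms by auto
next
  fix x y assume "p = Inl x" "q = Inr y" then show ?thesis using good_LR assms by auto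
next
  fix x y assume "p = Inr x" "q = Inl y" then show ?thesis using good_LR assms good_sym by fastforce
qed

lemma sides:
  assumes bp: "bij \<pi>" and sim: "sqs_sim \<pi> \<tau> \<tau>'"
    and t: "bij \<tau>" "\<tau> 0 = 0" "nonlin \<tau>" and t': "bij \<tau>'" "\<tau>' 0 = 0" "nonlin \<tau>'"
  shows "(\<forall>p. isl (\<pi> p) = isl p) \<or> (\<forall>p. isl (\<pi> p) = (\<not> isl p))"
proof -
  have ip: "inj \<pi>" using bp bij_is_inj by blast
  have key: "isl (\<pi> p) = isl (\<pi> q) \<longleftrightarrow> isl p = isl q" for p q
  proof (cases "p = q")
    case False
    then have ne: "\<pi> p \<noteq> \<pi> q" using ip by (simp add: inj_eq)
    have "isl (\<pi> p) = isl (\<pi> q) \<longleftrightarrow> good (SQS \<tau>') (\<pi> p) (\<pi> q)" using good_char[OF t' ne] by simp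
    also have "\<dots> \<longleftrightarrow> good (SQS \<tau>) p q" using good_inv[OF ip, of "SQS \<tau>" p q] sim unfolding sqs_sim_def by simp
    also have "\<dots> \<longleftrightarrow> isl p = isl q" using good_char[OF t False] .
    finally show ?thesis .
  qed simp
  show ?thesis
  proof (cases "isl (\<pi> (Inl 0))")
    case True
    then show ?thesis using key[of _ "Inl 0"] by auto
  next
    case False
    then show ?thesis using key[of _ "Inl 0"] by auto
  qed
qed

lemma additive_linear:
  assumes "\<And>x y. h (x + y) = h x + h y"
  shows "Vector_Spaces.linear (*s) (*s) (h :: bit^'n \<Rightarrow> bit^'m)"
proof -
  have h0: "h 0 = 0" using assms[of 0 0] by simp
  have sc: "h (c *s x) = c *s h x" for c x
    by (cases c) (simp_all add: h0)
  show ?thesis unfolding Vector_Spaces.linear_iff by (intro conjI allI vec.vector_space_axioms assms sc)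
qed

lemma fundamental:
  fixes f :: "bit^'n \<Rightarrow> bit^'n"
  assumes inj: "inj f"
    and Q: "\<And>a b c d. distinct [a, b, c, d] \<Longrightarrow> a + b + c + d = 0 \<Longrightarrow> f a + f b + f c + f d = 0"
  shows "\<exists>a A. invertible A \<and> (\<forall>x. f x = a + A *v x)"
proof -
  define h where "h x = f x + f 0" for x
  have add: "h (x + y) = h x + h y" for x y
  proof (cases "x = 0 \<or> y = 0 \<or> x = y")
    case True
    then show ?thesis unfolding h_def by (auto simp: ac_simps)
  next
    case False
    then have "distinct [0, x, y, x + y]" by auto
    moreover have "0 + x + y + (x + y) = 0" by (simp add: ac_simps)
    ultimately have "f 0 + f x + f y + f (x + y) = 0" by (rule Q)
    then have "f (x + y) = f 0 + f x + f y" by (metis vec_add_eq0_iff)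
    then show ?thesis unfolding h_def by (simp add: ac_simps)
  qed
  have lin: "Vector_Spaces.linear (*s) (*s) h" by (rule additive_linear[OF add])
  have mw: "matrix h *v x = h x" for x by (rule matrix_works[OF lin])
  have "inj h" using inj unfolding h_def inj_def by simp
  then have "inj ((*v) (matrix h))" using mw by (simp add: inj_def)
  then have "invertible (matrix h)" using matrix_left_invertible_injective invertible_left_inverse by blast
  moreover have "f x = f 0 + matrix h *v x" for x unfolding mw h_def by (simp add: ac_simps)
  ultimately show ?thesis by blast
qed

lemma Q0E: "X \<in> Q0 \<Longrightarrow> \<exists>a b c d. distinct [a,b,c,d] \<and> a+b+c+d = 0 \<and> X = Inl ` {a,b,c,d}"
  unfolding Q0_def by blast
lemma Q1E: "X \<in> Q1 \<Longrightarrow> \<exists>a b c d. distinct [a,b,c,d] \<and> a+b+c+d = 0 \<and> X = Inr ` {a,b,c,d}"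
  unfolding Q1_def by blast
lemma QtE: "X \<in> Qtau \<tau> \<Longrightarrow> \<exists>a b c d. \<tau> (a + c) = b + d \<and> X = Inl ` {a, c} \<union> Inr ` {b, d}"
  unfolding Qtau_def by blast

lemma ne1: "Inl ` X \<noteq> Inl ` A \<union> Inr ` {b, d}"
proof
  assume e: "Inl ` X = Inl ` A \<union> Inr ` {b, d}"
  have "Inr b \<in> Inl ` A \<union> Inr ` {b, d}" by simp
  then show False unfolding e[symmetric] by auto
qed
lemma ne2: "Inr ` X \<noteq> Inl ` {a, c} \<union> Inr ` B"
proof
  assume e: "Inr ` X = Inl ` {a, c} \<union> Inr ` B"
  have "Inl a \<in> Inl ` {a, c} \<union> Inr ` B" by simp
  then show False unfolding e[symmetric] by auto
qed
lemma ne3: "Inl ` X \<noteq> Inr ` {a, b, c, d}"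
proof
  assume e: "Inl ` X = Inr ` {a, b, c, d}"
  have "Inr a \<in> Inr ` {a, b, c, d}" by simp
  then have "Inr a \<in> Inl ` X" by (simp only: e)
  then show False by blast
qed
lemma ne4: "Inr ` X \<noteq> Inl ` {a, b, c, d}"
proof
  assume e: "Inr ` X = Inl ` {a, b, c, d}"
  have "Inl a \<in> Inl ` {a, b, c, d}" by simp
  then have "Inl a \<in> Inr ` X" by (simp only: e)
  then show False by blast
qed
lemma ne5: "Inl ` {p, q} \<union> Inr ` {r, s} \<noteq> Inl ` {a, b, c, d}"
proof
  assume e: "Inl ` {p, q} \<union> Inr ` {r, s} = Inl ` {a, b, c, d}"
  have "Inr r \<in> Inl ` {p, q} \<union> Inr ` {r, s}" by simp
  then show False unfolding e by auto
qed
lemma ne6: "Inl ` {p, q} \<union> Inr ` {r, s} \<noteq> Inr ` {a, b, c, d}"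
proof
  assume e: "Inl ` {p, q} \<union> Inr ` {r, s} = Inr ` {a, b, c, d}"
  have "Inl p \<in> Inl ` {p, q} \<union> Inr ` {r, s}" by simp
  then show False unfolding e by auto
qed

lemma LQ0:
  fixes \<tau> :: "bit^'n::finite \<Rightarrow> bit^'n"
  assumes "Inl ` {p, q, r, s} \<in> SQS \<tau>" "distinct [p, q, r, s]"
  shows "p + q + r + s = 0"
proof -
  have "Inl ` {p, q, r, s} \<notin> Q1" unfolding Q1_def using ne3 by blast
  moreover have "Inl ` {p, q, r, s} \<notin> Qtau \<tau>" unfolding Qtau_def using ne1 by blast
  ultimately have "Inl ` {p, q, r, s} \<in> Q0" using assms(1) unfolding SQS_def by blast
  from Q0E[OF this] obtain a b c d where d: "distinct [a,b,c,d]" and s: "a+b+c+d = 0" and e: "Inl ` {p, q, r, s} = (Inl ` {a,b,c,d} :: 'n point set)"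
    by blast
  have "{p, q, r, s} = {a, b, c, d}" using e by (simp only: inj_image_eq_iff[OF inj_Inl] inj_image_eq_iff[OF inj_Inr])
  then show ?thesis using sum4[OF d] sum4[OF assms(2)] s by simp
qed

lemma RQ1:
  fixes \<tau> :: "bit^'n::finite \<Rightarrow> bit^'n"
  assumes "Inr ` {p, q, r, s} \<in> SQS \<tau>" "distinct [p, q, r, s]"
  shows "p + q + r + s = 0"
proof -
  have "Inr ` {p, q, r, s} \<notin> Q0" unfolding Q0_def using ne4 by blast
  moreover have "Inr ` {p, q, r, s} \<notin> Qtau \<tau>" unfolding Qtau_def using ne2 by blast
  ultimately have "Inr ` {p, q, r, s} \<in> Q1" using assms(1) unfolding SQS_def by blast
  from Q1E[OF this] obtain a b c d where d: "distinct [a,b,c,d]" and s: "a+b+c+d = 0" and e: "Inr ` {p, q, r, s} = (Inr ` {a,b,c,d} :: 'n point set)"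
    by blast
  have "{p, q, r, s} = {a, b, c, d}" using e by (simp only: inj_image_eq_iff[OF inj_Inl] inj_image_eq_iff[OF inj_Inr])
  then show ?thesis using sum4[OF d] sum4[OF assms(2)] s by simp
qed

lemma LRQ:
  fixes \<tau> :: "bit^'n::finite \<Rightarrow> bit^'n"
  assumes "Inl ` {p, q} \<union> Inr ` {r, s} \<in> SQS \<tau>"
  shows "\<tau> (p + q) = r + s"
proof -
  have "Inl ` {p, q} \<union> Inr ` {r, s} \<notin> Q0" unfolding Q0_def using ne5 by blast
  moreover have "Inl ` {p, q} \<union> Inr ` {r, s} \<notin> Q1" unfolding Q1_def using ne6 by blast
  ultimately have "Inl ` {p, q} \<union> Inr ` {r, s} \<in> Qtau \<tau>" using assms(1) unfolding SQS_def by blast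
  from QtE[OF this] obtain a' b' c' d' where s: "\<tau> (a' + c') = b' + d'"
    and e: "Inl ` {p, q} \<union> Inr ` {r, s} = (Inl ` {a', c'} \<union> Inr ` {b', d'} :: 'n point set)"
    by blast
  have "{p, q} = {a', c'}" using arg_cong[OF e, of "\<lambda>S. {x. Inl x \<in> S}"] by (simp only: inl_pre)
  then have 1: "p + q = a' + c'" using doubleton_sum by metis
  have "{r, s} = {b', d'}" using arg_cong[OF e, of "\<lambda>S. {x. Inr x \<in> S}"] by (simp only: inr_pre)
  then have 2: "r + s = b' + d'" using doubleton_sum by metis
  show ?thesis using s 1 2 by simp
qed

lemma Q0_mem: "distinct [a, b, c, d] \<Longrightarrow> a + b + c + d = 0 \<Longrightarrow> Inl ` {a, b, c, d} \<in> SQS \<tau>"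
  unfolding SQS_def Q0_def by blast
lemma Q1_mem: "distinct [a, b, c, d] \<Longrightarrow> a + b + c + d = 0 \<Longrightarrow> Inr ` {a, b, c, d} \<in> SQS \<tau>"
  unfolding SQS_def Q1_def by blast

lemma side_pres:
  assumes bp: "bij \<pi>" and sim: "sqs_sim \<pi> \<tau> \<tau>'" and il: "\<forall>p. isl (\<pi> p) = isl p"
    and t: "bij \<tau>" "\<tau> 0 = 0" and t': "\<tau>' 0 = 0"
  shows "\<exists>a A b B. invertible A \<and> invertible B \<and> \<pi> = sigma2 a A b B \<and> \<tau>' = conj_perm B \<tau> A"
proof -
  define f where "f x = projl (\<pi> (Inl x))" for x
  define g where "g x = projr (\<pi> (Inr x))" for x
  have pl: "\<pi> (Inl x) = Inl (f x)" for x
    using il[rule_format, of "Inl x"] unfolding f_def by (cases "\<pi> (Inl x)") auto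
  have pr: "\<pi> (Inr x) = Inr (g x)" for x
    using il[rule_format, of "Inr x"] unfolding g_def by (cases "\<pi> (Inr x)") auto
  have ip: "inj \<pi>" using bp bij_is_inj by blast
  have injf: "inj f" unfolding inj_def by (metis ip pl inj_eq Sum_Type.Inl_inject)
  have injg: "inj g" unfolding inj_def by (metis ip pr inj_eq Sum_Type.Inr_inject)
  have mem: "\<pi> ` S \<in> SQS \<tau>'" if "S \<in> SQS \<tau>" for S
    using sim that unfolding sqs_sim_def by blast
  have Qf: "f a + f b + f c + f d = 0" if "distinct [a, b, c, d]" "a + b + c + d = 0" for a b c d
  proof -
    have "\<pi> ` (Inl ` {a, b, c, d}) \<in> SQS \<tau>'" by (rule mem[OF Q0_mem[OF that]])
    then have "Inl ` {f a, f b, f c, f d} \<in> SQS \<tau>'" by (simp add: pl)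
    moreover have "distinct [f a, f b, f c, f d]" using that injf by (simp add: inj_eq)
    ultimately show ?thesis by (rule LQ0)
  qed
  have Qg: "g a + g b + g c + g d = 0" if "distinct [a, b, c, d]" "a + b + c + d = 0" for a b c d
  proof -
    have "\<pi> ` (Inr ` {a, b, c, d}) \<in> SQS \<tau>'" by (rule mem[OF Q1_mem[OF that]])
    then have "Inr ` {g a, g b, g c, g d} \<in> SQS \<tau>'" by (simp add: pr)
    moreover have "distinct [g a, g b, g c, g d]" using that injg by (simp add: inj_eq)
    ultimately show ?thesis by (rule RQ1)
  qed
  obtain a A where A: "invertible A" and fA: "\<And>x. f x = a + A *v x" using fundamental[OF injf Qf] by blast
  obtain b B where B: "invertible B" and gB: "\<And>x. g x = b + B *v x" using fundamental[OF injg Qg] by blast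
  have pis: "\<pi> = sigma2 a A b B"
  proof
    fix p show "\<pi> p = sigma2 a A b B p" by (cases p) (simp_all add: pl pr fA gB)
  qed
  have tt: "\<tau>' (A *v x) = B *v \<tau> x" for x
  proof (cases "x = 0")
    case True then show ?thesis using t t' by simp
  next
    case False
    have tx: "\<tau> x \<noteq> 0" using False t by (metis bij_pointE)
    have "\<tau> (0 + x) = 0 + \<tau> x" "0 + \<tau> x \<noteq> 0" using tx by simp_all
    then have "Inl ` {0, x} \<union> Inr ` {0, \<tau> x} \<in> SQS \<tau>" unfolding SQS_def Qtau_def by blast
    then have "\<pi> ` (Inl ` {0, x} \<union> Inr ` {0, \<tau> x}) \<in> SQS \<tau>'" by (rule mem)
    then have "Inl ` {f 0, f x} \<union> Inr ` {g 0, g (\<tau> x)} \<in> SQS \<tau>'" by (simp add: pl pr image_Un)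
    then have "\<tau>' (f 0 + f x) = g 0 + g (\<tau> x)" by (rule LRQ)
    then show ?thesis by (simp add: fA gB)
  qed
  have "\<tau>' = conj_perm B \<tau> A"
  proof
    fix y
    have "\<tau>' y = \<tau>' (A *v (matrix_inv A *v y))" using A by simp
    also have "\<dots> = conj_perm B \<tau> A y" unfolding tt conj_perm_def ..
    finally show "\<tau>' y = conj_perm B \<tau> A y" .
  qed
  then show ?thesis using A B pis by blast
qed

lemma card4E:
  assumes "card X = 4"
  shows "\<exists>a b c d. X = {a, b, c, d} \<and> distinct [a, b, c, d]"
proof -
  have f: "finite X" using assms by (metis card.infinite zero_neq_numeral)
  have "X \<noteq> {}" using assms by auto
  then obtain a where a: "a \<in> X" by blast
  have "card (X - {a}) = 3" using assms a f by simp
  then obtain b c d where bcd: "X - {a} = {b, c, d}" "b \<noteq> c" "c \<noteq> d" "b \<noteq> d"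
    by (auto simp: card_3_iff)
  have "X = {a, b, c, d}" using a bcd(1) by auto
  moreover have "distinct [a, b, c, d]" using bcd by auto
  ultimately show ?thesis by blast
qed

lemma of_nat_bit: "(of_nat n :: bit) = (if even n then 0 else 1)"
  by (induction n) auto

lemma hamming_char: "hamming_sqs = {S :: (bit^'m::finite) set. card S = 4 \<and> sum id S = 0}"
proof (intro set_eqI iffI)
  fix S :: "(bit^'m) set"
  assume "S \<in> hamming_sqs"
  then obtain c where c: "c \<in> ext_hamming_code" and S: "S = {x. c x \<noteq> 0}" and c4: "card {x. c x \<noteq> 0} = 4"
    unfolding hamming_sqs_def by blast
  have c1: "x \<in> S \<Longrightarrow> c x = 1" for x using S by (cases "c x") auto
  have "(\<Sum>x\<in>UNIV. c x *s x) = (\<Sum>x\<in>S. c x *s x)"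
    by (rule sum.mono_neutral_right) (auto simp: S)
  also have "\<dots> = (\<Sum>x\<in>S. x)" using c1 by simp
  finally have "sum id S = 0" using c unfolding ext_hamming_code_def by simp
  then show "S \<in> {S. card S = 4 \<and> sum id S = 0}" using c4 S by simp
next
  fix S :: "(bit^'m) set"
  assume "S \<in> {S. card S = 4 \<and> sum id S = 0}"
  then have c4: "card S = 4" and s0: "sum id S = 0" by auto
  define c where "c x = (if x \<in> S then 1 else (0::bit))" for x
  have supp: "{x. c x \<noteq> 0} = S" unfolding c_def by auto
  have "(\<Sum>x\<in>UNIV. c x) = (\<Sum>x\<in>S. 1)"
    by (rule sum.mono_neutral_cong_right) (auto simp: c_def)
  also have "\<dots> = 0" using c4 by (simp add: of_nat_bit)
  finally have 1: "(\<Sum>x\<in>UNIV. c x) = 0" .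
  have "(\<Sum>x\<in>UNIV. c x *s x) = (\<Sum>x\<in>S. x)"
    by (rule sum.mono_neutral_cong_right) (auto simp: c_def)
  then have 2: "(\<Sum>x\<in>UNIV. c x *s x) = 0" using s0 by simp
  have "c \<in> ext_hamming_code" unfolding ext_hamming_code_def using 1 2 by simp
  then show "S \<in> hamming_sqs" unfolding hamming_sqs_def using supp c4 by auto
qed

lemma inl_pre1: "{x. Inl x \<in> Inl ` A} = A" by auto
lemma inr_pre1: "{x. Inr x \<in> Inl ` A} = {}" by auto
lemma inl_pre2: "{x. Inl x \<in> Inr ` A} = {}" by auto
lemma inr_pre2: "{x. Inr x \<in> Inr ` A} = A" by auto

lemma split_pts: "P = Inl ` {x. Inl x \<in> P} \<union> Inr ` {y. Inr y \<in> P}"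
proof (intro set_eqI iffI)
  fix p assume "p \<in> P" then show "p \<in> Inl ` {x. Inl x \<in> P} \<union> Inr ` {y. Inr y \<in> P}" by (cases p) auto
qed auto

lemma block_char:
  fixes \<tau> :: "bit^'n::finite \<Rightarrow> bit^'n"
  assumes bij: "bij \<tau>" and z: "\<tau> 0 = 0"
  shows "Inl ` X \<union> Inr ` Y \<in> SQS \<tau> \<longleftrightarrow> (card X = 4 \<and> Y = {} \<and> sum id X = 0) \<or> (X = {} \<and> card Y = 4 \<and> sum id Y = 0)
     \<or> (card X = 2 \<and> card Y = 2 \<and> \<tau> (sum id X) = sum id Y)" (is "?P \<in> _ \<longleftrightarrow> ?R")
proof
  assume "?P \<in> SQS \<tau>"
  then consider (Q0) "?P \<in> Q0" | (Q1) "?P \<in> Q1" | (Qt) "?P \<in> Qtau \<tau>" unfolding SQS_def by blast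
  then show ?R
  proof cases
    case Q0
    from Q0E[OF this] obtain a b c d where d: "distinct [a,b,c,d]" and s: "a+b+c+d = 0"
      and e: "?P = (Inl ` {a,b,c,d} :: 'n point set)" by blast
    have X: "X = {a,b,c,d}" using arg_cong[OF e, of "\<lambda>S. {x. Inl x \<in> S}"] by (simp only: inl_pre inl_pre1)
    have Y: "Y = {}" using arg_cong[OF e, of "\<lambda>S. {x. Inr x \<in> S}"] by (simp only: inr_pre inr_pre1)
    have "card X = 4" using d X by simp
    moreover have "sum id X = 0" using sum4[OF d] s X by simp
    ultimately show ?R using Y by blast
  next
    case Q1
    from Q1E[OF this] obtain a b c d where d: "distinct [a,b,c,d]" and s: "a+b+c+d = 0"
      and e: "?P = (Inr ` {a,b,c,d} :: 'n point set)" by blast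
    have X: "X = {}" using arg_cong[OF e, of "\<lambda>S. {x. Inl x \<in> S}"] by (simp only: inl_pre inl_pre2)
    have Y: "Y = {a,b,c,d}" using arg_cong[OF e, of "\<lambda>S. {x. Inr x \<in> S}"] by (simp only: inr_pre inr_pre2)
    have "card Y = 4" using d Y by simp
    moreover have "sum id Y = 0" using sum4[OF d] s Y by simp
    ultimately show ?R using X by blast
  next
    case Qt
    from QtE[OF this] obtain a b c d where s: "\<tau> (a + c) = b + d" and nz: "b + d \<noteq> 0"
      and e: "?P = (Inl ` {a, c} \<union> Inr ` {b, d} :: 'n point set)" using Qt unfolding Qtau_def by blast
    have X: "X = {a, c}" using arg_cong[OF e, of "\<lambda>S. {x. Inl x \<in> S}"] by (simp only: inl_pre)
    have Y: "Y = {b, d}" using arg_cong[OF e, of "\<lambda>S. {x. Inr x \<in> S}"] by (simp only: inr_pre)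
    have bd: "b \<noteq> d" using nz by simp
    have ac: "a \<noteq> c" using nz s z by auto
    have "card X = 2" "card Y = 2" using X Y ac bd by simp_all
    moreover have "\<tau> (sum id X) = sum id Y" using X Y ac bd s by simp
    ultimately show ?R by blast
  qed
next
  assume ?R
  then consider (A) "card X = 4" "Y = {}" "sum id X = 0" | (B) "X = {}" "card Y = 4" "sum id Y = 0"
    | (C) "card X = 2" "card Y = 2" "\<tau> (sum id X) = sum id Y" by blast
  then show "?P \<in> SQS \<tau>"
  proof cases
    case A
    from card4E[OF A(1)] obtain a b c d where X: "X = {a,b,c,d}" and d: "distinct [a,b,c,d]" by blast
    have "a + b + c + d = 0" using sum4[OF d] A(3) X by simp
    then have "Inl ` {a,b,c,d} \<in> SQS \<tau>" by (rule Q0_mem[OF d])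
    then show ?thesis using X A(2) by simp
  next
    case B
    from card4E[OF B(2)] obtain a b c d where Y: "Y = {a,b,c,d}" and d: "distinct [a,b,c,d]" by blast
    have "a + b + c + d = 0" using sum4[OF d] B(3) Y by simp
    then have "Inr ` {a,b,c,d} \<in> SQS \<tau>" by (rule Q1_mem[OF d])
    then show ?thesis using Y B(1) by simp
  next
    case C
    from C(1) obtain a c where X: "X = {a, c}" "a \<noteq> c" by (auto simp: card_2_iff)
    from C(2) obtain b d where Y: "Y = {b, d}" "b \<noteq> d" by (auto simp: card_2_iff)
    have "\<tau> (a + c) = b + d" using C(3) X Y by simp
    moreover have "b + d \<noteq> 0" using Y by simp
    ultimately have "Inl ` {a, c} \<union> Inr ` {b, d} \<in> Qtau \<tau>" unfolding Qtau_def by blast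
    then show ?thesis using X Y unfolding SQS_def by simp
  qed
qed

definition E :: "bit^'n::finite \<Rightarrow> bit \<Rightarrow> bit^('n option)" where
  "E v t = (\<chi> i. case i of None \<Rightarrow> t | Some j \<Rightarrow> v $ j)"

lemma E_sum: "(\<Sum>x\<in>S. E (f x) (g x)) = E (sum f S) (sum g S)"
  unfolding E_def by (simp add: vec_eq_iff split: option.split)

lemma E_eq: "E v t = E v' t' \<longleftrightarrow> v = v' \<and> t = t'"
proof
  assume e: "E v t = E v' t'"
  have "v $ j = v' $ j" for j using arg_cong[OF e, of "\<lambda>w. w $ Some j"] by (simp add: E_def)
  moreover have "t = t'" using arg_cong[OF e, of "\<lambda>w. w $ None"] by (simp add: E_def)
  ultimately show "v = v' \<and> t = t'" by (simp add: vec_eq_iff)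
qed simp

lemma E_0: "E 0 0 = 0"
  unfolding E_def by (simp add: vec_eq_iff split: option.split)

lemma E_surj: "w = E (\<chi> j. w $ Some j) (w $ None)"
  unfolding E_def by (simp add: vec_eq_iff split: option.split)

lemma additive_sum:
  assumes add: "\<And>u v. \<tau> (u + v) = \<tau> u + \<tau> v" and z: "\<tau> 0 = 0" and f: "finite X"
  shows "sum \<tau> X = \<tau> (sum id X)"
  using f by (induction X rule: finite_induct) (simp_all add: z add)

lemma lin_affine:
  fixes \<tau> :: "bit^'n::finite \<Rightarrow> bit^'n"
  assumes bij: "bij \<tau>" and z: "\<tau> 0 = 0" and lin: "\<not> nonlin \<tau>"
  shows "affine_SQS \<tau>"
proof -
  have add: "\<tau> (u + v) = \<tau> u + \<tau> v" for u v using lin unfolding nonlin_def by blast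
  define \<phi> :: "'n point \<Rightarrow> bit^('n option)" where
    "\<phi> p = (case p of Inl x \<Rightarrow> E (\<tau> x) 0 | Inr y \<Rightarrow> E y 1)" for p
  have injt: "inj \<tau>" using bij bij_is_inj by blast
  have "inj \<phi>"
  proof (rule injI)
    fix p q assume "\<phi> p = \<phi> q" then show "p = q"
      unfolding \<phi>_def using injt by (cases p; cases q) (auto simp: E_eq inj_eq)
  qed
  moreover have "surj \<phi>"
  proof (rule surjI)
    fix w :: "bit^('n option)"
    let ?v = "\<chi> j. w $ Some j"
    show "\<phi> (if w $ None = 0 then Inl (inv \<tau> ?v) else Inr ?v) = w"
    proof (cases "w $ None = 0")
      case True
      then show ?thesis unfolding \<phi>_def using E_surj[of w, symmetric] by (simp add: surj_f_inv_f[OF bij_is_surj[OF bij]])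
    next
      case False
      then have "w $ None = 1" by (cases "w $ None") auto
      then show ?thesis unfolding \<phi>_def using E_surj[of w, symmetric] False by simp
    qed
  qed
  ultimately have b: "bij \<phi>" by (rule bijI)
  have key: "P \<in> SQS \<tau> \<longleftrightarrow> card (\<phi> ` P) = 4 \<and> sum id (\<phi> ` P) = 0" for P
  proof -
    define X where "X = {x. Inl x \<in> P}"
    define Y where "Y = {y. Inr y \<in> P}"
    have P: "P = Inl ` X \<union> Inr ` Y" unfolding X_def Y_def by (rule split_pts)
    have ip: "inj \<phi>" using b bij_is_inj by blast
    have disj: "Inl ` X \<inter> Inr ` Y = {}" by auto
    have cP: "card (\<phi> ` P) = card X + card Y"
      unfolding card_image[OF inj_on_subset[OF ip subset_UNIV]] P
      by (simp add: card_Un_disjoint[OF _ _ disj] card_image)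
    have "sum id (\<phi> ` P) = sum \<phi> P" by (simp add: sum.reindex[OF inj_on_subset[OF ip subset_UNIV]])
    also have "\<dots> = sum \<phi> (Inl ` X) + sum \<phi> (Inr ` Y)" unfolding P by (rule sum.union_disjoint) (simp_all add: disj)
    also have "\<dots> = (\<Sum>x\<in>X. E (\<tau> x) 0) + (\<Sum>y\<in>Y. E y 1)"
      by (simp add: sum.reindex \<phi>_def)
    also have "\<dots> = E (sum \<tau> X + sum id Y) (of_nat (card Y))"
      unfolding E_sum by (simp add: E_def vec_eq_iff split: option.split)
    also have "\<dots> = E (\<tau> (sum id X) + sum id Y) (of_nat (card Y))"
      using additive_sum[OF add z] by simp
    finally have sP: "sum id (\<phi> ` P) = 0 \<longleftrightarrow> \<tau> (sum id X) = sum id Y \<and> even (card Y)"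
      by (simp add: E_0[symmetric] E_eq of_nat_bit)
    have tz: "\<tau> u = 0 \<longleftrightarrow> u = 0" for u using injt z by (metis inj_eq)
    have "P \<in> SQS \<tau> \<longleftrightarrow> (card X = 4 \<and> Y = {} \<and> sum id X = 0) \<or> (X = {} \<and> card Y = 4 \<and> sum id Y = 0)
     \<or> (card X = 2 \<and> card Y = 2 \<and> \<tau> (sum id X) = sum id Y)" unfolding P by (rule block_char[OF bij z])
    also have "\<dots> \<longleftrightarrow> card X + card Y = 4 \<and> \<tau> (sum id X) = sum id Y \<and> even (card Y)"
    proof
      assume "card X + card Y = 4 \<and> \<tau> (sum id X) = sum id Y \<and> even (card Y)"
      then have h: "card X + card Y = 4" "\<tau> (sum id X) = sum id Y" "even (card Y)" by auto
      have "card Y = 0 \<or> card Y = 2 \<or> card Y = 4" using h(1,3) by presburger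
      then show "(card X = 4 \<and> Y = {} \<and> sum id X = 0) \<or> (X = {} \<and> card Y = 4 \<and> sum id Y = 0)
     \<or> (card X = 2 \<and> card Y = 2 \<and> \<tau> (sum id X) = sum id Y)"
      proof (elim disjE)
        assume "card Y = 0"
        then have "Y = {}" by simp
        then show ?thesis using h tz by simp
      next
        assume "card Y = 2" then show ?thesis using h by simp
      next
        assume "card Y = 4"
        then have "X = {}" using h(1) by simp
        then show ?thesis using h z \<open>card Y = 4\<close> by simp
      qed
    next
      assume "(card X = 4 \<and> Y = {} \<and> sum id X = 0) \<or> (X = {} \<and> card Y = 4 \<and> sum id Y = 0)
     \<or> (card X = 2 \<and> card Y = 2 \<and> \<tau> (sum id X) = sum id Y)"
      then show "card X + card Y = 4 \<and> \<tau> (sum id X) = sum id Y \<and> even (card Y)"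
        using z by auto
    qed
    finally show ?thesis using cP sP by simp
  qed
  have "(\<lambda>q. \<phi> ` q) ` SQS \<tau> = hamming_sqs"
    unfolding hamming_char
  proof (intro set_eqI iffI)
    fix S :: "(bit^('n option)) set" assume "S \<in> (\<lambda>q. \<phi> ` q) ` SQS \<tau>"
    then show "S \<in> {S. card S = 4 \<and> sum id S = 0}" using key by auto
  next
    fix S :: "(bit^('n option)) set" assume S: "S \<in> {S. card S = 4 \<and> sum id S = 0}"
    have e: "\<phi> ` (inv \<phi> ` S) = S" using b by (simp add: bij_is_surj image_inv_f_f image_f_inv_f surj_f_inv_f image_image)
    then have "inv \<phi> ` S \<in> SQS \<tau>" using key S by simp
    then show "S \<in> (\<lambda>q. \<phi> ` q) ` SQS \<tau>" using e by (metis image_eqI)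
  qed
  then show ?thesis unfolding affine_SQS_def using b by blast
qed

lemma affine_transfer:
  fixes \<tau> \<tau>' :: "bit^'n::finite \<Rightarrow> bit^'n"
  assumes a: "affine_SQS \<tau>'" and bp: "bij \<pi>" and sim: "(\<lambda>q. \<pi> ` q) ` SQS \<tau> = SQS \<tau>'"
  shows "affine_SQS \<tau>"
proof -
  from a obtain \<phi> :: "'n point \<Rightarrow> bit ^ ('n option)" where b: "bij \<phi>" and h: "(\<lambda>q. \<phi> ` q) ` SQS \<tau>' = hamming_sqs"
    unfolding affine_SQS_def by blast
  have "bij (\<phi> \<circ> \<pi>)" using b bp by (rule bij_comp[rotated])
  moreover have "(\<lambda>q. (\<phi> \<circ> \<pi>) ` q) ` SQS \<tau> = hamming_sqs"
  proof -
    have e: "(\<lambda>q. (\<phi> \<circ> \<pi>) ` q) = (\<lambda>q. \<phi> ` q) \<circ> (\<lambda>q. \<pi> ` q)" by (auto simp: fun_eq_iff image_comp)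
    show ?thesis unfolding e image_comp[symmetric] sim h ..
  qed
  ultimately show ?thesis unfolding affine_SQS_def by blast
qed

lemma sim_inv:
  assumes bp: "bij \<pi>" and sim: "(\<lambda>q. \<pi> ` q) ` S = T"
  shows "(\<lambda>q. inv \<pi> ` q) ` T = S"
proof -
  have ip: "inj \<pi>" using bp bij_is_inj by blast
  have "(\<lambda>q. inv \<pi> ` q) ` T = (\<lambda>q. inv \<pi> ` q) ` (\<lambda>q. \<pi> ` q) ` S" unfolding sim ..
  also have "\<dots> = (\<lambda>q. inv \<pi> ` \<pi> ` q) ` S" by (simp add: image_image)
  also have "\<dots> = S" using ip by (simp add: image_inv_f_f)
  finally show ?thesis .
qed

theorem theorem1:
  fixes \<tau> \<tau>' :: "bit ^ 'n::finite \<Rightarrow> bit ^ 'n"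
  assumes "bij \<tau>" and "\<tau> 0 = 0" and "bij \<tau>'" and "\<tau>' 0 = 0"
  shows "(affine_SQS \<tau> \<and> affine_SQS \<tau>' \<longrightarrow> (\<exists>\<pi>. bij \<pi> \<and> sqs_sim \<pi> \<tau> \<tau>'))
    \<and> (\<not> affine_SQS \<tau> \<or> \<not> affine_SQS \<tau>' \<longrightarrow>
        (\<forall>\<pi>. bij \<pi> \<longrightarrow>
          (sqs_sim \<pi> \<tau> \<tau>' \<longleftrightarrow>
            (\<exists>a A b B. invertible A \<and> invertible B \<and> \<pi> = sigma2 a A b B \<and> \<tau>' = conj_perm B \<tau> A)
          \<or> (\<exists>a A b B. invertible A \<and> invertible B \<and> \<pi> = sigma2 a A b B \<circ> xi \<and> \<tau>' = conj_perm B (inv \<tau>) A))))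
    \<and> (\<forall>(\<rho>::bit ^ 'n \<Rightarrow> bit ^ 'n) a A b B. bij \<rho> \<and> \<rho> 0 = 0 \<and> invertible A \<and> invertible B \<longrightarrow>
        sqs_sim (sigma2 a A b B) \<rho> (conj_perm B \<rho> A)
        \<and> sqs_sim (sigma2 a A b B \<circ> xi) \<rho> (conj_perm B (inv \<rho>) A))"
proof (intro conjI impI allI)
  assume "affine_SQS \<tau> \<and> affine_SQS \<tau>'"
  then obtain \<phi> \<phi>' :: "'n point \<Rightarrow> bit ^ ('n option)" where b: "bij \<phi>" and h: "(\<lambda>q. \<phi> ` q) ` SQS \<tau> = hamming_sqs"
    and b': "bij \<phi>'" and h': "(\<lambda>q. \<phi>' ` q) ` SQS \<tau>' = hamming_sqs"
    unfolding affine_SQS_def by blast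
  have bi: "bij (inv \<phi>')" using b' by (simp add: bij_imp_bij_inv)
  show "\<exists>\<pi>. bij \<pi> \<and> sqs_sim \<pi> \<tau> \<tau>'"
  proof (intro exI conjI)
    show "bij (inv \<phi>' \<circ> \<phi>)" using b bi by (rule bij_comp)
    have e: "(\<lambda>q. (inv \<phi>' \<circ> \<phi>) ` q) = (\<lambda>q. inv \<phi>' ` q) \<circ> (\<lambda>q. \<phi> ` q)" by (auto simp: fun_eq_iff image_comp)
    have "(\<lambda>q. inv \<phi>' ` q) ` hamming_sqs = SQS \<tau>'" using sim_inv[OF b' h'] .
    then show "sqs_sim (inv \<phi>' \<circ> \<phi>) \<tau> \<tau>'" unfolding sqs_sim_def e image_comp[symmetric] h .
  qed
next
  fix \<pi> :: "'n point \<Rightarrow> 'n point"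
  assume na: "\<not> affine_SQS \<tau> \<or> \<not> affine_SQS \<tau>'" and bp: "bij \<pi>"
  show "sqs_sim \<pi> \<tau> \<tau>' \<longleftrightarrow>
            (\<exists>a A b B. invertible A \<and> invertible B \<and> \<pi> = sigma2 a A b B \<and> \<tau>' = conj_perm B \<tau> A)
          \<or> (\<exists>a A b B. invertible A \<and> invertible B \<and> \<pi> = sigma2 a A b B \<circ> xi \<and> \<tau>' = conj_perm B (inv \<tau>) A)"
  proof
    assume sim: "sqs_sim \<pi> \<tau> \<tau>'"
    have s1: "(\<lambda>q. \<pi> ` q) ` SQS \<tau> = SQS \<tau>'" using sim unfolding sqs_sim_def .
    have bi: "bij (inv \<pi>)" using bp by (simp add: bij_imp_bij_inv)
    have "\<not> affine_SQS \<tau>" "\<not> affine_SQS \<tau>'"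
      using na affine_transfer[OF _ bp s1] affine_transfer[OF _ bi sim_inv[OF bp s1]] by blast+
    then have nl: "nonlin \<tau>" "nonlin \<tau>'" using lin_affine assms by blast+
    from sides[OF bp sim assms(1,2) nl(1) assms(3,4) nl(2)]
    show "(\<exists>a A b B. invertible A \<and> invertible B \<and> \<pi> = sigma2 a A b B \<and> \<tau>' = conj_perm B \<tau> A)
          \<or> (\<exists>a A b B. invertible A \<and> invertible B \<and> \<pi> = sigma2 a A b B \<circ> xi \<and> \<tau>' = conj_perm B (inv \<tau>) A)"
    proof
      assume "\<forall>p. isl (\<pi> p) = isl p"
      then show ?thesis using side_pres[OF bp sim _ assms(1,2,4)] by blast
    next
      assume il: "\<forall>p. isl (\<pi> p) = (\<not> isl p)"
      have bt: "bij (inv \<tau>)" using assms(1) by (simp add: bij_imp_bij_inv)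
      have zt: "inv \<tau> 0 = 0" using assms(1,2) by (metis bij_inv_eq_iff)
      have "sqs_sim xi (inv \<tau>) (inv (inv \<tau>))" by (rule xi_sim[OF bt zt])
      then have "sqs_sim xi (inv \<tau>) \<tau>" using assms(1) by (simp add: inv_inv_eq)
      then have sim2: "sqs_sim (\<pi> \<circ> xi) (inv \<tau>) \<tau>'" using sim by (rule sim_comp)
      have bx: "bij xi" by (metis bij_betw_def inj_xi surj_def xi_xi)
      have bp2: "bij (\<pi> \<circ> xi)" using bx bp by (rule bij_comp)
      have il2: "\<forall>p. isl ((\<pi> \<circ> xi) p) = isl p" using il by (auto split: sum.split simp: xi_def)
      obtain a A b B where A: "invertible A" "invertible B" and e: "\<pi> \<circ> xi = sigma2 a A b B"
        and t: "\<tau>' = conj_perm B (inv \<tau>) A"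
        using side_pres[OF bp2 sim2 il2 bt zt assms(4)] by blast
      have "\<pi> = (\<pi> \<circ> xi) \<circ> xi" by (simp add: fun_eq_iff)
      then have "\<pi> = sigma2 a A b B \<circ> xi" using e by simp
      then show ?thesis using A t by blast
    qed
  next
    assume "(\<exists>a A b B. invertible A \<and> invertible B \<and> \<pi> = sigma2 a A b B \<and> \<tau>' = conj_perm B \<tau> A)
          \<or> (\<exists>a A b B. invertible A \<and> invertible B \<and> \<pi> = sigma2 a A b B \<circ> xi \<and> \<tau>' = conj_perm B (inv \<tau>) A)"
    then show "sqs_sim \<pi> \<tau> \<tau>'" using part3[OF assms(1,2)] by blast
  qed
next
  fix \<rho> :: "bit ^ 'n \<Rightarrow> bit ^ 'n" and a b :: "bit ^ 'n" and A B :: "bit ^ 'n ^ 'n"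
  assume "bij \<rho> \<and> \<rho> 0 = 0 \<and> invertible A \<and> invertible B"
  then show "sqs_sim (sigma2 a A b B) \<rho> (conj_perm B \<rho> A)" "sqs_sim (sigma2 a A b B \<circ> xi) \<rho> (conj_perm B (inv \<rho>) A)"
    using part3 by blast+
qed

end
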